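(* In the BICM setting described in the context, with message $1$ transmitted and $\mathsf D$ the ORBGRAND metric, $\lim_{N\to\infty}\operatorname{var}\mathsf D(1)=0$.
   Context: Let $m\ge1$, let $\mathcal S$ be a constellation with $|\mathcal S|=2^m$, and let $\mu:\{+1,-1\}^m\to\mathcal S$ be a bijective labeling. For $s\in\mathcal S$, let $b_j(s)$ be the $j$-th coordinate of $\mu^{-1}(s)$. The channel is memoryless with output space $\mathbb R^d$ (norm $|\cdot|$) and transition densities $p(y\mid s)$. For $j=1,\dots,m$ define $$q_j^\pm(y)=2^{-(m-1)}\sum_{s:\,b_j(s)=\pm1}p(y\mid s).$$ For each $j$, let $\mathsf X_j$ be uniform on $\{\pm1\}$ and let $\mathsf Y$ have density $q_j^{\mathsf X_j}$ given $\mathsf X_j$. Let $\Psi_j$ be the CDF of $|\ln(q_j^+(\mathsf Y)/q_j^-(\mathsf Y))|$, and let $\bar\Psi=\frac1m\sum_j\Psi_j$. Assume that for each $j$: (A1) there exist $M_1>0$, $a>0$ and a polynomial $S_1$ with $q_j^\pm(y)<S_1(|y|)e^{-a|y|}$ for $|y|>M_1$; (A2) there exist $M_2>0$ and a polynomial $S_2$ with $|\ln(q_j^+(y)/q_j^-(y))|<S_2(|y|)$ for $|y|>M_2$; (A3) $\Psi_j$, $\Psi_j^{-1}$, $\bar\Psi$ and $\bar\Psi^{-1}$ are smooth with finite first, second and third derivatives. Random coding: the codebook has $\lceil e^{NR}\rceil$ codewords, each consisting of bits $\mathsf X_{i,j}(w)$, $i\le N$, $j\le m$, all i.i.d. uniform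 on $\{\pm1\}$. Message $1$ is transmitted. Symbol $i$ is $s_i(1)=\mu(\mathsf X_{i,1}(1),\dots,\mathsf X_{i,m}(1))$, and the outputs $\mathsf Y_i$ are conditionally independent with densities $p(\cdot\mid s_i(1))$. Let $\mathsf T_{i,j}=\ln(q_j^+(\mathsf Y_i)/q_j^-(\mathsf Y_i))$. Let $\mathsf R_{i,j}$ be the rank of $|\mathsf T_{i,j}|$ among all $mN$ values (rank $1$ is the smallest). Let $\mathrm{sgn}(t)=1$ if $t\ge0$ and $-1$ otherwise. The ORBGRAND metric is $$\mathsf D(w)=\frac1{mN}\sum_{i,j}\frac{\mathsf R_{i,j}}{mN}\mathbf 1\big(\mathrm{sgn}(\mathsf T_{i,j})\mathsf X_{i,j}(w)<0\big).$$ *)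

theory Defs
  imports "HOL-Probability.Probability" "HOL-Computational_Algebra.Polynomial"
begin

definition bitvecs :: "nat \<Rightarrow> (nat \<Rightarrow> real) set" where
  "bitvecs m = ({..<m} \<rightarrow>\<^sub>E {-1, 1})"

definition bitlab :: "nat \<Rightarrow> ((nat \<Rightarrow> real) \<Rightarrow> 's) \<Rightarrow> 's \<Rightarrow> nat \<Rightarrow> real" where
  "bitlab m \<mu> s j = inv_into (bitvecs m) \<mu> s j"

definition qj :: "nat \<Rightarrow> 's set \<Rightarrow> ((nat \<Rightarrow> real) \<Rightarrow> 's) \<Rightarrow> ('s \<Rightarrow> 'a \<Rightarrow> real)
                  \<Rightarrow> nat \<Rightarrow> real \<Rightarrow> 'a \<Rightarrow> real" where
  "qj m S \<mu> p j \<sigma> y = inverse (2 ^ (m - 1)) * (\<Sum>s\<in>{s\<in>S. bitlab m \<mu> s j = \<sigma>}. p s y)"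

definition llr :: "nat \<Rightarrow> 's set \<Rightarrow> ((nat \<Rightarrow> real) \<Rightarrow> 's) \<Rightarrow> ('s \<Rightarrow> 'a \<Rightarrow> real)
                  \<Rightarrow> nat \<Rightarrow> 'a \<Rightarrow> real" where
  "llr m S \<mu> p j y = ln (qj m S \<mu> p j 1 y / qj m S \<mu> p j (-1) y)"

text \<open>Psi_j: CDF of |llr_j(Y)| where X_j uniform on {+1,-1} and Y has density q_j^{X_j},
  i.e. Y has density (q_j^+ + q_j^-)/2 with respect to Lebesgue measure.\<close>
definition PsiCDF :: "nat \<Rightarrow> 's set \<Rightarrow> ((nat \<Rightarrow> real) \<Rightarrow> 's) \<Rightarrow> ('s \<Rightarrow> 'a::euclidean_space \<Rightarrow> real)
                  \<Rightarrow> nat \<Rightarrow> real \<Rightarrow> real" where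
  "PsiCDF m S \<mu> p j t =
     measure (density lborel (\<lambda>y. ennreal ((qj m S \<mu> p j 1 y + qj m S \<mu> p j (-1) y) / 2)))
             {y. \<bar>llr m S \<mu> p j y\<bar> \<le> t}"

definition C3_on :: "real set \<Rightarrow> (real \<Rightarrow> real) \<Rightarrow> bool" where
  "C3_on A f \<longleftrightarrow> (\<forall>x\<in>A. \<forall>k<3. ((deriv ^^ k) f) differentiable (at x))"

definition smooth_cdf :: "(real \<Rightarrow> real) \<Rightarrow> bool" where
  "smooth_cdf F \<longleftrightarrow> C3_on {0<..} F \<and>
     (\<exists>G. (\<forall>t\<in>{0<..}. F t \<in> {0<..<1} \<and> G (F t) = t) \<and>
          (\<forall>u\<in>{0<..<1}. G u \<in> {0<..} \<and> F (G u) = u) \<and>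
          C3_on {0<..<1} G)"

definition sgnp :: "real \<Rightarrow> real" where
  "sgnp t = (if t \<ge> 0 then 1 else -1)"

text \<open>Law of one channel use (bits of codeword 1 at position i, output Y_i):
  bits uniform on {+1,-1}^m, output with density p(. | mu(bits)).\<close>
definition sym_measure :: "nat \<Rightarrow> ((nat \<Rightarrow> real) \<Rightarrow> 's) \<Rightarrow> ('s \<Rightarrow> 'a::euclidean_space \<Rightarrow> real)
                  \<Rightarrow> ((nat \<Rightarrow> real) \<times> 'a) measure" where
  "sym_measure m \<mu> p = density (count_space (bitvecs m) \<Otimes>\<^sub>M lborel)
      (\<lambda>(b, y). ennreal ((1/2) ^ m * p (\<mu> b) y))"

text \<open>Joint law of (X_{i,.}(1), Y_i), i < N: i.i.d. over i.\<close>
definition trans_measure :: "nat \<Rightarrow> ((nat \<Rightarrow> real) \<Rightarrow> 's) \<Rightarrow> ('s \<Rightarrow> 'a::euclidean_space \<Rightarrow> real)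
                  \<Rightarrow> nat \<Rightarrow> (nat \<Rightarrow> (nat \<Rightarrow> real) \<times> 'a) measure" where
  "trans_measure m \<mu> p N = (\<Pi>\<^sub>M i\<in>{..<N}. sym_measure m \<mu> p)"

definition rankT :: "nat \<Rightarrow> 's set \<Rightarrow> ((nat \<Rightarrow> real) \<Rightarrow> 's) \<Rightarrow> ('s \<Rightarrow> 'a \<Rightarrow> real) \<Rightarrow> nat
                  \<Rightarrow> (nat \<Rightarrow> (nat \<Rightarrow> real) \<times> 'a) \<Rightarrow> nat \<Rightarrow> nat \<Rightarrow> nat" where
  "rankT m S \<mu> p N \<omega> i j =
     1 + card {(i', j') \<in> {..<N} \<times> {..<m}.
        \<bar>llr m S \<mu> p j' (snd (\<omega> i'))\<bar> < \<bar>llr m S \<mu> p j (snd (\<omega> i))\<bar> \<or>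
        (\<bar>llr m S \<mu> p j' (snd (\<omega> i'))\<bar> = \<bar>llr m S \<mu> p j (snd (\<omega> i))\<bar> \<and> i' * m + j' < i * m + j)}"

definition orbgrand_D1 :: "nat \<Rightarrow> 's set \<Rightarrow> ((nat \<Rightarrow> real) \<Rightarrow> 's) \<Rightarrow> ('s \<Rightarrow> 'a \<Rightarrow> real) \<Rightarrow> nat
                  \<Rightarrow> (nat \<Rightarrow> (nat \<Rightarrow> real) \<times> 'a) \<Rightarrow> real" where
  "orbgrand_D1 m S \<mu> p N \<omega> =
     (1 / real (m * N)) * (\<Sum>i<N. \<Sum>j<m.
        (real (rankT m S \<mu> p N \<omega> i j) / real (m * N)) *
        (if sgnp (llr m S \<mu> p j (snd (\<omega> i))) * fst (\<omega> i) j < 0 then 1 else 0))"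

end

theory Submission
  imports Defs
begin


lemma (in prob_space) abs_exp_le:
  fixes f :: "'a \<Rightarrow> real"
  assumes "f \<in> borel_measurable M" "\<And>x. x \<in> space M \<Longrightarrow> \<bar>f x\<bar> \<le> B"
  shows "\<bar>expectation f\<bar> \<le> B"
proof -
  have int: "integrable M f"
    using assms by (intro integrable_const_bound[where B=B]) auto
  have "\<bar>expectation f\<bar> \<le> expectation (\<lambda>x. \<bar>f x\<bar>)" by (rule integral_abs_bound)
  also have "\<dots> \<le> expectation (\<lambda>x. B)"
    using assms int by (intro integral_mono) auto
  also have "\<dots> = B" by (simp add: prob_space)
  finally show ?thesis .
qed

lemma (in prob_space) var_sum_bound:
  fixes Z :: "'t \<Rightarrow> 'a \<Rightarrow> real"
  assumes T: "finite T" and meas: "\<And>t. t \<in> T \<Longrightarrow> Z t \<in> borel_measurable M"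
    and bnd: "\<And>t x. t \<in> T \<Longrightarrow> x \<in> space M \<Longrightarrow> \<bar>Z t x\<bar> \<le> B" and B: "0 \<le> B"
    and ind: "\<And>t u. t \<in> T \<Longrightarrow> u \<in> T \<Longrightarrow> \<not> dep t u \<Longrightarrow>
       expectation (\<lambda>x. Z t x * Z u x) = expectation (Z t) * expectation (Z u)"
  shows "variance (\<lambda>x. \<Sum>t\<in>T. Z t x) \<le> (\<Sum>t\<in>T. \<Sum>u\<in>T. if dep t u then 2 * B\<^sup>2 else 0)"
proof -
  have intZ: "integrable M (Z t)" if "t \<in> T" for t
    using meas bnd that by (intro integrable_const_bound[where B=B]) auto
  have measZZ: "(\<lambda>x. Z t x * Z u x) \<in> borel_measurable M" if "t \<in> T" "u \<in> T" for t u
    using meas that by measurable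
  have bZZ: "\<bar>Z t x * Z u x\<bar> \<le> B\<^sup>2" if "t \<in> T" "u \<in> T" "x \<in> space M" for t u x
    using bnd[OF that(1,3)] bnd[OF that(2,3)] B
    by (simp add: abs_mult power2_eq_square mult_mono')
  have intZZ: "integrable M (\<lambda>x. Z t x * Z u x)" if "t \<in> T" "u \<in> T" for t u
    using measZZ[OF that] bZZ[OF that] by (intro integrable_const_bound[where B="B\<^sup>2"]) auto
  have intS: "integrable M (\<lambda>x. \<Sum>t\<in>T. Z t x)" using intZ by auto
  have sq: "(\<lambda>x. (\<Sum>t\<in>T. Z t x)\<^sup>2) = (\<lambda>x. \<Sum>t\<in>T. \<Sum>u\<in>T. Z t x * Z u x)"
    by (simp add: power2_eq_square sum_product)
  have intS2: "integrable M (\<lambda>x. (\<Sum>t\<in>T. Z t x)\<^sup>2)"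
    unfolding sq using intZZ by auto
  have "variance (\<lambda>x. \<Sum>t\<in>T. Z t x) = expectation (\<lambda>x. (\<Sum>t\<in>T. Z t x)\<^sup>2) - (expectation (\<lambda>x. \<Sum>t\<in>T. Z t x))\<^sup>2"
    by (rule variance_eq[OF intS intS2])
  also have "\<dots> = (\<Sum>t\<in>T. \<Sum>u\<in>T. expectation (\<lambda>x. Z t x * Z u x) - expectation (Z t) * expectation (Z u))"
    unfolding sq using intZ intZZ
    by (simp add: Bochner_Integration.integral_sum power2_eq_square sum_product sum_subtractf)
  also have "\<dots> \<le> (\<Sum>t\<in>T. \<Sum>u\<in>T. if dep t u then 2 * B\<^sup>2 else 0)"
  proof (intro sum_mono)
    fix t u assume tu: "t \<in> T" "u \<in> T"
    show "expectation (\<lambda>x. Z t x * Z u x) - expectation (Z t) * expectation (Z u)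
          \<le> (if dep t u then 2 * B\<^sup>2 else 0)"
    proof (cases "dep t u")
      case True
      have a: "\<bar>expectation (\<lambda>x. Z t x * Z u x)\<bar> \<le> B\<^sup>2"
        using abs_exp_le[OF measZZ[OF tu]] bZZ[OF tu] by blast
      have b: "\<bar>expectation (Z t)\<bar> \<le> B" using abs_exp_le meas bnd tu by blast
      have c: "\<bar>expectation (Z u)\<bar> \<le> B" using abs_exp_le meas bnd tu by blast
      have "\<bar>expectation (Z t) * expectation (Z u)\<bar> \<le> B\<^sup>2"
        using b c by (simp add: abs_mult power2_eq_square mult_mono')
      then show ?thesis using a True by simp
    next
      case False then show ?thesis using ind tu by simp
    qed
  qed
  finally show ?thesis .
qed



lemma PiM_coords_indep:
  assumes M: "prob_space M" and I: "I \<noteq> {}"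
  shows "prob_space.indep_vars (PiM I (\<lambda>_. M)) (\<lambda>_. M)
           (\<lambda>i \<omega>. if i \<in> I then \<omega> i else (SOME x. x \<in> space M)) I"
proof -
  interpret Mp: prob_space M by fact
  interpret P: product_prob_space "\<lambda>_. M" I by unfold_locales
  let ?c = "SOME x. x \<in> space M"
  have c: "?c \<in> space M" using Mp.not_empty by (meson ex_in_conv someI)
  let ?X = "\<lambda>i \<omega>. if i \<in> I then \<omega> i else ?c"
  have rv: "?X i \<in> measurable (PiM I (\<lambda>_. M)) M" for i
    using c by (cases "i \<in> I") auto
  have d1: "distr (PiM I (\<lambda>_. M)) (PiM I (\<lambda>_. M)) (\<lambda>x. \<lambda>i\<in>I. ?X i x) = PiM I (\<lambda>_. M)"
  proof -
    have "distr (PiM I (\<lambda>_. M)) (PiM I (\<lambda>_. M)) (\<lambda>x. \<lambda>i\<in>I. ?X i x) =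
          distr (PiM I (\<lambda>_. M)) (PiM I (\<lambda>_. M)) (\<lambda>x. x)"
      by (intro distr_cong) (auto simp: space_PiM PiE_def extensional_def)
    also have "\<dots> = PiM I (\<lambda>_. M)" by simp
    finally show ?thesis .
  qed
  have d2: "PiM I (\<lambda>i. distr (PiM I (\<lambda>_. M)) M (?X i)) = PiM I (\<lambda>_. M)"
  proof (rule PiM_cong)
    fix i assume "i \<in> I"
    then have "distr (PiM I (\<lambda>_. M)) M (?X i) = distr (PiM I (\<lambda>_. M)) M (\<lambda>\<omega>. \<omega> i)"
      by (intro distr_cong) auto
    also have "\<dots> = M" using P.PiM_component[OF \<open>i \<in> I\<close>] .
    finally show "distr (PiM I (\<lambda>_. M)) M (?X i) = M" .
  qed simp
  show ?thesis
    using P.indep_vars_iff_distr_eq_PiM[OF I rv] d1 d2 by simp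
qed

lemma PiM_indep_integral:
  fixes f g :: "_ \<Rightarrow> real"
  assumes M: "prob_space M" and I: "I \<noteq> {}" and AB: "A \<inter> B = {}" "A \<subseteq> I" "B \<subseteq> I"
    and f: "f \<in> borel_measurable (PiM A (\<lambda>_. M))" and g: "g \<in> borel_measurable (PiM B (\<lambda>_. M))"
    and fi: "integrable (PiM I (\<lambda>_. M)) (\<lambda>\<omega>. f (restrict \<omega> A))"
    and gi: "integrable (PiM I (\<lambda>_. M)) (\<lambda>\<omega>. g (restrict \<omega> B))"
  shows "(\<integral>\<omega>. f (restrict \<omega> A) * g (restrict \<omega> B) \<partial>PiM I (\<lambda>_. M)) =
         (\<integral>\<omega>. f (restrict \<omega> A) \<partial>PiM I (\<lambda>_. M)) * (\<integral>\<omega>. g (restrict \<omega> B) \<partial>PiM I (\<lambda>_. M))"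
proof -
  interpret Mp: prob_space M by fact
  interpret P: product_prob_space "\<lambda>_. M" I by unfold_locales
  let ?c = "SOME x. x \<in> space M"
  let ?X = "\<lambda>i \<omega>. if i \<in> I then \<omega> i else ?c"
  have iv: "P.indep_var (PiM A (\<lambda>_. M)) (\<lambda>\<omega>. restrict (\<lambda>i. ?X i \<omega>) A)
                     (PiM B (\<lambda>_. M)) (\<lambda>\<omega>. restrict (\<lambda>i. ?X i \<omega>) B)"
    by (rule P.indep_var_restrict[OF PiM_coords_indep[OF M I] AB])
  have rA: "(\<lambda>\<omega>. restrict (\<lambda>i. ?X i \<omega>) A) = (\<lambda>\<omega>. restrict \<omega> A)"
    using AB by (auto simp: fun_eq_iff)
  have rB: "(\<lambda>\<omega>. restrict (\<lambda>i. ?X i \<omega>) B) = (\<lambda>\<omega>. restrict \<omega> B)"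
    using AB by (auto simp: fun_eq_iff)
  have iv2: "P.indep_var borel (f \<circ> (\<lambda>\<omega>. restrict \<omega> A)) borel (g \<circ> (\<lambda>\<omega>. restrict \<omega> B))"
    using P.indep_var_compose[OF iv[unfolded rA rB] f g] .
  show ?thesis
    using P.indep_var_lebesgue_integral[OF iv2] fi gi by (simp add: comp_def)
qed



lemma card_bitvecs: "card (bitvecs m) = 2 ^ m"
  unfolding bitvecs_def by (simp add: card_PiE numeral_2_eq_2)

lemma finite_bitvecs: "finite (bitvecs m)"
  unfolding bitvecs_def by (simp add: finite_PiE)

context
  fixes m :: nat and S :: "'s set" and \<mu> :: "(nat \<Rightarrow> real) \<Rightarrow> 's"
    and p :: "'s \<Rightarrow> 'a::euclidean_space \<Rightarrow> real"
  assumes S_fin: "finite S"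
    and mu_into: "\<And>b. b \<in> bitvecs m \<Longrightarrow> \<mu> b \<in> S"
    and p_meas: "\<forall>s\<in>S. p s \<in> borel_measurable lborel"
    and p_nonneg: "\<forall>s\<in>S. \<forall>y. p s y \<ge> 0"
    and p_dens: "\<forall>s\<in>S. (\<integral>\<^sup>+ y. ennreal (p s y) \<partial>lborel) = 1"
begin

lemma qj_meas: "qj m S \<mu> p j \<sigma> \<in> borel_measurable lborel"
  unfolding qj_def using p_meas S_fin
  by (intro borel_measurable_times borel_measurable_const borel_measurable_sum) auto

lemma llr_meas: "llr m S \<mu> p j \<in> borel_measurable lborel"
  unfolding llr_def using qj_meas by measurable

lemma sets_sym: "sets (sym_measure m \<mu> p) = sets (count_space (bitvecs m) \<Otimes>\<^sub>M lborel)"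
  unfolding sym_measure_def by simp

lemma L_meas: "(\<lambda>w. llr m S \<mu> p j (snd w)) \<in> borel_measurable (sym_measure m \<mu> p)"
  unfolding measurable_cong_sets[OF sets_sym refl]
  using llr_meas by measurable

lemma F_meas: "(\<lambda>w. fst w j) \<in> borel_measurable (sym_measure m \<mu> p)"
  unfolding measurable_cong_sets[OF sets_sym refl]
  by (rule measurable_compose[OF measurable_fst]) simp

lemma sym_prob: "prob_space (sym_measure m \<mu> p)"
proof (rule prob_spaceI)
  let ?f = "\<lambda>(b, y). ennreal ((1/2) ^ m * p (\<mu> b) y)"
  have fm: "?f \<in> borel_measurable (count_space (bitvecs m) \<Otimes>\<^sub>M lborel)"
  proof (rule measurable_pair_measure_countable1)
    show "countable (bitvecs m)" using finite_bitvecs by (rule countable_finite)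
    fix b assume "b \<in> bitvecs m"
    then have h[measurable]: "p (\<mu> b) \<in> borel_measurable borel" using p_meas mu_into by auto
    have e: "(\<lambda>y. ?f (b, y)) = (\<lambda>y. ennreal ((1/2) ^ m * p (\<mu> b) y))" by simp
    show "(\<lambda>y. ?f (b, y)) \<in> borel_measurable lborel" unfolding e by measurable
  qed
  have "emeasure (sym_measure m \<mu> p) (space (sym_measure m \<mu> p)) =
        (\<integral>\<^sup>+ x. ?f x \<partial>(count_space (bitvecs m) \<Otimes>\<^sub>M lborel))"
    unfolding sym_measure_def using fm
    by (subst emeasure_density) (auto simp: fm intro!: nn_integral_cong)
  also have "\<dots> = (\<integral>\<^sup>+ b. \<integral>\<^sup>+ y. ?f (b, y) \<partial>lborel \<partial>count_space (bitvecs m))"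
    using lborel.nn_integral_fst[OF fm] by simp
  also have "\<dots> = (\<Sum>b\<in>bitvecs m. \<integral>\<^sup>+ y. ?f (b, y) \<partial>lborel)"
    using finite_bitvecs by (simp add: nn_integral_count_space_finite)
  also have "\<dots> = (\<Sum>b\<in>bitvecs m. ennreal ((1/2) ^ m))"
  proof (rule sum.cong[OF refl])
    fix b assume b: "b \<in> bitvecs m"
    then have s: "\<mu> b \<in> S" by (rule mu_into)
    have "(\<integral>\<^sup>+ y. ?f (b, y) \<partial>lborel) = (\<integral>\<^sup>+ y. ennreal ((1/2) ^ m) * ennreal (p (\<mu> b) y) \<partial>lborel)"
      using p_nonneg s by (intro nn_integral_cong) (simp add: ennreal_mult)
    also have "\<dots> = ennreal ((1/2) ^ m) * (\<integral>\<^sup>+ y. ennreal (p (\<mu> b) y) \<partial>lborel)"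
      using p_meas s by (intro nn_integral_cmult) auto
    also have "\<dots> = ennreal ((1/2) ^ m)" using p_dens s by simp
    finally show "(\<integral>\<^sup>+ y. ?f (b, y) \<partial>lborel) = ennreal ((1/2) ^ m)" .
  qed
  also have "\<dots> = ennreal (\<Sum>b\<in>bitvecs m. (1/2) ^ m)"
    by (rule sum_ennreal) simp
  also have "(\<Sum>b\<in>bitvecs m. (1/2::real) ^ m) = 2 ^ m * (1/2) ^ m"
    by (simp only: sum_constant card_bitvecs) simp
  also have "(2::real) ^ m * (1/2) ^ m = 1" by (simp only: power_mult_distrib[symmetric]) simp
  finally show "emeasure (sym_measure m \<mu> p) (space (sym_measure m \<mu> p)) = 1" by simp
qed

end


definition Zt :: "nat \<Rightarrow> nat \<Rightarrow> (nat \<Rightarrow> 'w \<Rightarrow> real) \<Rightarrow> (nat \<Rightarrow> 'w \<Rightarrow> real) \<Rightarrow> nat \<Rightarrow> nat \<Rightarrow> (nat \<Rightarrow> 'w) \<Rightarrow> real" where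
  "Zt m N A E i i' \<omega> = (1 / real (m * N))\<^sup>2 * (\<Sum>j<m. E j (\<omega> i) * ((if i' = i then 1 else 0) +
      (\<Sum>j'<m. if A j' (\<omega> i') < A j (\<omega> i) \<or> (A j' (\<omega> i') = A j (\<omega> i) \<and> i' * m + j' < i * m + j) then 1 else 0)))"

lemma Zt_restrict: "Zt m N A E i i' \<omega> = Zt m N A E i i' (restrict \<omega> {i, i'})"
  unfolding Zt_def by simp

lemma Zt_meas:
  assumes "\<And>j. A j \<in> borel_measurable M" "\<And>j. E j \<in> borel_measurable M" "i \<in> K" "i' \<in> K"
  shows "Zt m N A E i i' \<in> borel_measurable (PiM K (\<lambda>_. M))"
proof -
  have [measurable]: "(\<lambda>\<omega>. A j (\<omega> k)) \<in> borel_measurable (PiM K (\<lambda>_. M))"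
     "(\<lambda>\<omega>. E j (\<omega> k)) \<in> borel_measurable (PiM K (\<lambda>_. M))" if "k \<in> K" for j k
    using assms that by (auto intro: measurable_compose[OF measurable_component_singleton])
  have ind[measurable]: "(\<lambda>\<omega>. if A j' (\<omega> i') < A j (\<omega> i) \<or> (A j' (\<omega> i') = A j (\<omega> i) \<and> c) then 1 else (0::real))
      \<in> borel_measurable (PiM K (\<lambda>_. M))" for j j' c
  proof (cases c)
    case True
    have "{\<omega> \<in> space (PiM K (\<lambda>_. M)). A j' (\<omega> i') \<le> A j (\<omega> i)} \<in> sets (PiM K (\<lambda>_. M))"
      using assms(3,4) by measurable
    then show ?thesis using True by (simp add: le_less[symmetric] borel_measurable_indicator' indicator_def[symmetric])
  next
    case False
    have "{\<omega> \<in> space (PiM K (\<lambda>_. M)). A j' (\<omega> i') < A j (\<omega> i)} \<in> sets (PiM K (\<lambda>_. M))"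
      using assms(3,4) by measurable
    then show ?thesis using False by simp
  qed
  show ?thesis unfolding Zt_def using assms(3,4)
    by (intro borel_measurable_times borel_measurable_const borel_measurable_sum borel_measurable_add ind) auto
qed

lemma Zt_bound:
  assumes "\<And>j w. 0 \<le> E j w" "\<And>j w. E j w \<le> 1"
  shows "\<bar>Zt m N A E i i' \<omega>\<bar> \<le> (1 / real (m * N))\<^sup>2 * (real m * (1 + real m))"
proof -
  have s: "0 \<le> (\<Sum>j'<m. if A j' (\<omega> i') < A j (\<omega> i) \<or> (A j' (\<omega> i') = A j (\<omega> i) \<and> i' * m + j' < i * m + j) then 1 else (0::real))
     \<and> (\<Sum>j'<m. if A j' (\<omega> i') < A j (\<omega> i) \<or> (A j' (\<omega> i') = A j (\<omega> i) \<and> i' * m + j' < i * m + j) then 1 else (0::real)) \<le> real m" for j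
  proof
    show "0 \<le> (\<Sum>j'<m. if A j' (\<omega> i') < A j (\<omega> i) \<or> (A j' (\<omega> i') = A j (\<omega> i) \<and> i' * m + j' < i * m + j) then 1 else (0::real))"
      by (intro sum_nonneg) auto
    have "(\<Sum>j'<m. if A j' (\<omega> i') < A j (\<omega> i) \<or> (A j' (\<omega> i') = A j (\<omega> i) \<and> i' * m + j' < i * m + j) then 1 else (0::real)) \<le> (\<Sum>j'<m. 1)"
      by (intro sum_mono) auto
    then show "(\<Sum>j'<m. if A j' (\<omega> i') < A j (\<omega> i) \<or> (A j' (\<omega> i') = A j (\<omega> i) \<and> i' * m + j' < i * m + j) then 1 else (0::real)) \<le> real m"
      by simp
  qed
  define inner where "inner j = E j (\<omega> i) * ((if i' = i then 1 else 0) +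
      (\<Sum>j'<m. if A j' (\<omega> i') < A j (\<omega> i) \<or> (A j' (\<omega> i') = A j (\<omega> i) \<and> i' * m + j' < i * m + j) then 1 else (0::real)))" for j
  have ib: "0 \<le> inner j \<and> inner j \<le> 1 + real m" for j
  proof -
    let ?s = "(\<Sum>j'<m. if A j' (\<omega> i') < A j (\<omega> i) \<or> (A j' (\<omega> i') = A j (\<omega> i) \<and> i' * m + j' < i * m + j) then 1 else (0::real))"
    have a: "0 \<le> (if i' = i then 1 else 0) + ?s" "(if i' = i then 1 else 0) + ?s \<le> 1 + real m"
      using s[of j] by auto
    have "E j (\<omega> i) * ((if i' = i then 1 else 0) + ?s) \<le> 1 * (1 + real m)"
      using a assms[of j "\<omega> i"] by (intro mult_mono) auto
    then show ?thesis using a assms[of j "\<omega> i"] unfolding inner_def by simp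
  qed
  have "0 \<le> (\<Sum>j<m. inner j)" using ib by (intro sum_nonneg) auto
  moreover have "(\<Sum>j<m. inner j) \<le> (\<Sum>j<m. 1 + real m)" using ib by (intro sum_mono) auto
  ultimately have "\<bar>\<Sum>j<m. inner j\<bar> \<le> real m * (1 + real m)" by simp
  then show ?thesis unfolding Zt_def inner_def[symmetric]
    by (simp add: abs_mult mult_left_mono)
qed

lemma card_filter_prod:
  "card {(a, b) \<in> {..<N::nat} \<times> {..<m::nat}. P a b} = (\<Sum>a<N. \<Sum>b<m. if P a b then 1 else (0::nat))"
proof -
  have e: "{(a, b) \<in> {..<N} \<times> {..<m::nat}. P a b} = {x \<in> {..<N} \<times> {..<m}. case x of (a,b) \<Rightarrow> P a b}"
    by auto
  have "card {(a, b) \<in> {..<N} \<times> {..<m::nat}. P a b} = (\<Sum>x\<in>{x \<in> {..<N} \<times> {..<m}. case x of (a,b) \<Rightarrow> P a b}. 1)"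
    unfolding e by simp
  also have "\<dots> = (\<Sum>x\<in>{..<N} \<times> {..<m}. if case x of (a,b) \<Rightarrow> P a b then 1 else 0)"
    by (rule sum.inter_filter, rule finite_cartesian_product) auto
  also have "\<dots> = (\<Sum>a<N. \<Sum>b<m. if P a b then 1 else (0::nat))"
    by (simp add: sum.cartesian_product split_beta)
  finally show ?thesis .
qed



lemma D_decomp:
  fixes m N :: nat and S :: "'s set" and \<mu> :: "(nat \<Rightarrow> real) \<Rightarrow> 's" and p :: "'s \<Rightarrow> 'a \<Rightarrow> real" and \<omega> :: "nat \<Rightarrow> (nat \<Rightarrow> real) \<times> 'a"
  defines "Af \<equiv> \<lambda>j w. \<bar>llr m S \<mu> p j (snd w)\<bar>"
    and "Ef \<equiv> \<lambda>j w. if sgnp (llr m S \<mu> p j (snd w)) * fst w j < 0 then 1 else (0::real)"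
  shows "orbgrand_D1 m S \<mu> p N \<omega> = (\<Sum>i<N. \<Sum>i'<N. Zt m N Af Ef i i' \<omega>)"
proof -
  let ?c = "(1 / real (m * N))\<^sup>2"
  define G where "G i j i' = (if i' = i then 1 else 0) +
      (\<Sum>j'<m. if Af j' (\<omega> i') < Af j (\<omega> i) \<or> (Af j' (\<omega> i') = Af j (\<omega> i) \<and> i' * m + j' < i * m + j) then 1 else (0::real))" for i j i'
  have R: "real (rankT m S \<mu> p N \<omega> i j) = (\<Sum>i'<N. G i j i')" if "i < N" for i j
  proof -
    have "real (rankT m S \<mu> p N \<omega> i j) = 1 + real (\<Sum>i'<N. \<Sum>j'<m.
       if Af j' (\<omega> i') < Af j (\<omega> i) \<or> (Af j' (\<omega> i') = Af j (\<omega> i) \<and> i' * m + j' < i * m + j) then 1 else (0::nat))"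
      unfolding rankT_def Af_def by (subst card_filter_prod) simp
    also have "\<dots> = (\<Sum>i'<N. (if i' = i then 1 else 0)) + (\<Sum>i'<N. \<Sum>j'<m.
       if Af j' (\<omega> i') < Af j (\<omega> i) \<or> (Af j' (\<omega> i') = Af j (\<omega> i) \<and> i' * m + j' < i * m + j) then 1 else (0::real))"
    proof -
      have a: "(\<Sum>i'<N. (if i' = i then 1 else (0::real))) = 1" using that by simp
      have b: "real (\<Sum>i'<N. \<Sum>j'<m.
       if Af j' (\<omega> i') < Af j (\<omega> i) \<or> (Af j' (\<omega> i') = Af j (\<omega> i) \<and> i' * m + j' < i * m + j) then 1 else (0::nat))
       = (\<Sum>i'<N. \<Sum>j'<m.
       if Af j' (\<omega> i') < Af j (\<omega> i) \<or> (Af j' (\<omega> i') = Af j (\<omega> i) \<and> i' * m + j' < i * m + j) then 1 else (0::real))"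
        unfolding of_nat_sum by (intro sum.cong refl) simp
      show ?thesis unfolding a b ..
    qed
    also have "\<dots> = (\<Sum>i'<N. G i j i')" unfolding G_def by (simp add: sum.distrib)
    finally show ?thesis .
  qed
  have "orbgrand_D1 m S \<mu> p N \<omega> = (\<Sum>i<N. \<Sum>j<m. ?c * (Ef j (\<omega> i) * real (rankT m S \<mu> p N \<omega> i j)))"
    unfolding orbgrand_D1_def Ef_def
    by (simp add: sum_distrib_left power2_eq_square field_simps)
  also have "\<dots> = (\<Sum>i<N. \<Sum>j<m. \<Sum>i'<N. ?c * (Ef j (\<omega> i) * G i j i'))"
    by (intro sum.cong refl) (simp add: R sum_distrib_left)
  also have "\<dots> = (\<Sum>i<N. \<Sum>i'<N. \<Sum>j<m. ?c * (Ef j (\<omega> i) * G i j i'))"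
    by (intro sum.cong refl sum.swap)
  also have "\<dots> = (\<Sum>i<N. \<Sum>i'<N. Zt m N Af Ef i i' \<omega>)"
    unfolding Zt_def G_def by (simp add: sum_distrib_left)
  finally show ?thesis .
qed



lemma sgnp_meas[measurable]: "sgnp \<in> borel_measurable borel"
  unfolding sgnp_def by measurable

lemma count_dep:
  fixes c :: real and N :: nat
  assumes c: "0 \<le> c" and t: "t \<in> {..<N} \<times> {..<N}"
  shows "(\<Sum>u\<in>{..<N} \<times> {..<N}. if {fst t, snd t} \<inter> {fst u, snd u} \<noteq> {} then c else 0) \<le> 4 * real N * c"
proof -
  let ?T = "{..<N} \<times> {..<N}"
  let ?F = "{u \<in> ?T. {fst t, snd t} \<inter> {fst u, snd u} \<noteq> {}}"
  have fin: "finite ?T" by simp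
  have "(\<Sum>u\<in>?T. if {fst t, snd t} \<inter> {fst u, snd u} \<noteq> {} then c else 0) = (\<Sum>u\<in>?F. c)"
    by (rule sum.inter_filter[OF fin, symmetric])
  also have "\<dots> = real (card ?F) * c" by simp
  also have "card ?F \<le> 4 * N"
  proof -
    have sub: "?F \<subseteq> ({fst t, snd t} \<times> {..<N}) \<union> ({..<N} \<times> {fst t, snd t})" by auto
    have "card ?F \<le> card (({fst t, snd t} \<times> {..<N}) \<union> ({..<N} \<times> {fst t, snd t}))"
      by (rule card_mono[OF _ sub]) simp
    also have "\<dots> \<le> card ({fst t, snd t} \<times> {..<N}) + card ({..<N} \<times> {fst t, snd t})"
      by (rule card_Un_le)
    also have "\<dots> = card {fst t, snd t} * N + N * card {fst t, snd t}"
      by (simp add: card_cartesian_product)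
    also have "\<dots> \<le> 2 * N + N * 2"
      using card_insert_le_m1[of 2 "{snd t}" "fst t"]
      by (intro add_mono mult_mono) (auto simp: card_insert_if)
    finally show ?thesis by simp
  qed
  then have "real (card ?F) * c \<le> real (4 * N) * c"
    using c by (intro mult_right_mono) auto
  finally show ?thesis by simp
qed

theorem lemma8:
  fixes m :: nat and S :: "'s set" and \<mu> :: "(nat \<Rightarrow> real) \<Rightarrow> 's"
    and p :: "'s \<Rightarrow> 'a::euclidean_space \<Rightarrow> real"
  assumes m_pos: "m \<ge> 1"
    and card_S: "card S = 2 ^ m"
    and mu_bij: "bij_betw \<mu> (bitvecs m) S"
    and p_meas: "\<forall>s\<in>S. p s \<in> borel_measurable lborel"
    and p_nonneg: "\<forall>s\<in>S. \<forall>y. p s y \<ge> 0"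
    and p_dens: "\<forall>s\<in>S. (\<integral>\<^sup>+ y. ennreal (p s y) \<partial>lborel) = 1"
    and A1: "\<forall>j<m. \<exists>M1>0. \<exists>a>0. \<exists>S1 :: real poly. \<forall>y. norm y > M1 \<longrightarrow>
               qj m S \<mu> p j 1 y < poly S1 (norm y) * exp (- a * norm y) \<and>
               qj m S \<mu> p j (-1) y < poly S1 (norm y) * exp (- a * norm y)"
    and A2: "\<forall>j<m. \<exists>M2>0. \<exists>S2 :: real poly. \<forall>y. norm y > M2 \<longrightarrow>
               \<bar>llr m S \<mu> p j y\<bar> < poly S2 (norm y)"
    and A3: "\<forall>j<m. smooth_cdf (PsiCDF m S \<mu> p j)"
    and A3bar: "smooth_cdf (\<lambda>t. (\<Sum>j<m. PsiCDF m S \<mu> p j t) / real m)"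
  shows "(\<lambda>N. prob_space.variance (trans_measure m \<mu> p N) (orbgrand_D1 m S \<mu> p N))
           \<longlonglongrightarrow> 0"
proof -
  let ?M = "sym_measure m \<mu> p"
  have S_fin: "finite S" proof (rule card_ge_0_finite)
    show "card S > 0" unfolding card_S by simp
  qed
  have mu_into: "\<And>b. b \<in> bitvecs m \<Longrightarrow> \<mu> b \<in> S" using mu_bij by (rule bij_betw_apply)
  have Mprob: "prob_space ?M" by (rule sym_prob[OF S_fin mu_into p_meas p_nonneg p_dens])
  define Af :: "nat \<Rightarrow> (nat \<Rightarrow> real) \<times> 'a \<Rightarrow> real" where "Af = (\<lambda>j w. \<bar>llr m S \<mu> p j (snd w)\<bar>)"
  define Ef :: "nat \<Rightarrow> (nat \<Rightarrow> real) \<times> 'a \<Rightarrow> real" where "Ef = (\<lambda>j w. if sgnp (llr m S \<mu> p j (snd w)) * fst w j < 0 then 1 else (0::real))"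
  have Lm[measurable]: "(\<lambda>w. llr m S \<mu> p j (snd w)) \<in> borel_measurable ?M" for j
    by (rule L_meas[OF S_fin mu_into p_meas p_nonneg p_dens])
  have Fm[measurable]: "(\<lambda>w. fst w j) \<in> borel_measurable ?M" for j
    by (rule F_meas[OF S_fin mu_into p_meas p_nonneg p_dens])
  have Am: "Af j \<in> borel_measurable ?M" for j unfolding Af_def by measurable
  have Em: "Ef j \<in> borel_measurable ?M" for j unfolding Ef_def by measurable
  have E01: "0 \<le> Ef j w" "Ef j w \<le> 1" for j w unfolding Ef_def by auto
  define K where "K = 8 * (1 + real m)\<^sup>2 / (real m)\<^sup>2"
  have bound: "prob_space.variance (trans_measure m \<mu> p N) (orbgrand_D1 m S \<mu> p N) \<le> K / real N"
    if N: "N \<ge> 1" for N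
  proof -
    let ?P = "PiM {..<N} (\<lambda>_. ?M)"
    let ?T = "{..<N} \<times> {..<N}"
    define Z where "Z t = Zt m N Af Ef (fst t) (snd t)" for t
    define B where "B = (1 / real (m * N))\<^sup>2 * (real m * (1 + real m))"
    interpret P: prob_space ?P by (rule prob_space_PiM) (use Mprob in auto)
    have Ieq: "{..<N} \<noteq> {}" using N by (auto simp: lessThan_empty_iff)
    have D: "orbgrand_D1 m S \<mu> p N = (\<lambda>\<omega>. \<Sum>t\<in>?T. Z t \<omega>)"
      unfolding Z_def Af_def Ef_def
      by (rule ext, subst D_decomp) (simp add: sum.cartesian_product split_beta)
    have Zm: "Z t \<in> borel_measurable (PiM K' (\<lambda>_. ?M))" if "fst t \<in> K'" "snd t \<in> K'" for t K'
      unfolding Z_def using Am Em that by (rule Zt_meas)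
    have Zb: "\<bar>Z t \<omega>\<bar> \<le> B" for t \<omega> unfolding Z_def B_def using E01 by (rule Zt_bound)
    have B0: "0 \<le> B" unfolding B_def by simp
    have Zint: "integrable ?P (Z t)" if "t \<in> ?T" for t
      using that Zm[of t "{..<N}"] Zb by (intro P.integrable_const_bound[where B=B]) auto
    have ind: "P.expectation (\<lambda>x. Z t x * Z u x) = P.expectation (Z t) * P.expectation (Z u)"
      if tu: "t \<in> ?T" "u \<in> ?T" "\<not> ({fst t, snd t} \<inter> {fst u, snd u} \<noteq> {})" for t u
    proof -
      have rt: "Z t \<omega> = Z t (restrict \<omega> {fst t, snd t})" for \<omega>
        unfolding Z_def by (rule Zt_restrict)
      have ru: "Z u \<omega> = Z u (restrict \<omega> {fst u, snd u})" for \<omega>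
        unfolding Z_def by (rule Zt_restrict)
      have "P.expectation (\<lambda>x. Z t (restrict x {fst t, snd t}) * Z u (restrict x {fst u, snd u})) =
            P.expectation (\<lambda>x. Z t (restrict x {fst t, snd t})) * P.expectation (\<lambda>x. Z u (restrict x {fst u, snd u}))"
      proof (rule PiM_indep_integral[OF Mprob Ieq])
        show "{fst t, snd t} \<inter> {fst u, snd u} = {}" using tu by simp
        show "{fst t, snd t} \<subseteq> {..<N}" "{fst u, snd u} \<subseteq> {..<N}" using tu by auto
        show "Z t \<in> borel_measurable (PiM {fst t, snd t} (\<lambda>_. ?M))" by (rule Zm) auto
        show "Z u \<in> borel_measurable (PiM {fst u, snd u} (\<lambda>_. ?M))" by (rule Zm) auto
        show "integrable ?P (\<lambda>x. Z t (restrict x {fst t, snd t}))"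
          using Zint[OF tu(1)] by (simp add: rt[symmetric])
        show "integrable ?P (\<lambda>x. Z u (restrict x {fst u, snd u}))"
          using Zint[OF tu(2)] by (simp add: ru[symmetric])
      qed
      then show ?thesis by (simp add: rt[symmetric] ru[symmetric])
    qed
    have "P.variance (\<lambda>\<omega>. \<Sum>t\<in>?T. Z t \<omega>) \<le>
          (\<Sum>t\<in>?T. \<Sum>u\<in>?T. if {fst t, snd t} \<inter> {fst u, snd u} \<noteq> {} then 2 * B\<^sup>2 else 0)"
      by (rule P.var_sum_bound[where dep="\<lambda>t u. {fst t, snd t} \<inter> {fst u, snd u} \<noteq> {}"])
         (use Zm Zb B0 ind in auto)
    also have "\<dots> \<le> (\<Sum>t\<in>?T. 4 * real N * (2 * B\<^sup>2))"
      by (intro sum_mono count_dep) (use B0 in auto)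
    also have "\<dots> = real N ^ 3 * 8 * B\<^sup>2" by (simp add: power3_eq_cube power2_eq_square)
    also have "\<dots> = K / real N"
    proof -
      have mm: "real m > 0" and nn: "real N > 0" using m_pos N by auto
      have b: "B = (1 + real m) / (real m * (real N)\<^sup>2)"
        unfolding B_def using mm nn by (simp add: field_simps power2_eq_square)
      show ?thesis unfolding b K_def using mm nn by (simp add: field_simps power2_eq_square power3_eq_cube)
    qed
    finally show ?thesis unfolding D trans_measure_def .
  qed
  have nonneg: "0 \<le> prob_space.variance (trans_measure m \<mu> p N) (orbgrand_D1 m S \<mu> p N)" for N
  proof -
    interpret P: prob_space "trans_measure m \<mu> p N"
      unfolding trans_measure_def by (rule prob_space_PiM) (use Mprob in auto)
    show ?thesis by (rule P.variance_positive)
  qed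
  show ?thesis
  proof (rule tendsto_sandwich[where f="\<lambda>_. 0" and h="\<lambda>N. K / real N"])
    show "\<forall>\<^sub>F N in sequentially. 0 \<le> prob_space.variance (trans_measure m \<mu> p N) (orbgrand_D1 m S \<mu> p N)"
      using nonneg by simp
    show "\<forall>\<^sub>F N in sequentially. prob_space.variance (trans_measure m \<mu> p N) (orbgrand_D1 m S \<mu> p N) \<le> K / real N"
      using bound by (intro eventually_sequentiallyI[of 1]) auto
    show "(\<lambda>_. 0) \<longlonglongrightarrow> (0::real)" by simp
    show "(\<lambda>N. K / real N) \<longlonglongrightarrow> 0" by (rule lim_const_over_n)
  qed
qed

end
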